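(* For every signature $\sigma$, the formula $\bigsqcup_{\mathcal F\in\mathbb F_\sigma}\Phi^{\mathcal F}$ is satisfied by every causal team over $\sigma$, i.e. $\models^c\bigsqcup_{\mathcal F\in\mathbb F_\sigma}\Phi^{\mathcal F}$.
   Context: A signature $\sigma=(\mathrm{Dom},\mathrm{Ran})$: $\mathrm{Dom}$ nonempty finite set of variables, each with nonempty finite range $\mathrm{Ran}(X)$; $\mathbf X=\mathbf x$ abbreviates $X_1=x_1\wedge\dots\wedge X_n=x_n$ ($\mathbf x\in\prod\mathrm{Ran}(X_i)$), inconsistent if it contains $X=x,X=x'$ with $x\ne x'$. $\mathcal{CO}[\sigma]$-formulas: $\alpha::=X=x\mid\neg\alpha\mid\alpha\wedge\alpha\mid\alpha\vee\alpha\mid\mathbf X=\mathbf x\;\Box\!\!\rightarrow\alpha$; $\alpha\supset\beta$ abbreviates $\neg\alpha\vee\beta$; $\sqcup$ is the global disjunction ($T\models\varphi\sqcup\psi$ iff $T\models\varphi$ or $T\models\psi$). A system of functions $\mathcal F$: for each $V\in\mathrm{En}(\mathcal F)\subseteq\mathrm{Dom}$ parents $PA^{\mathcal F}_V\subseteq\mathrm{Dom}\setminus\{V\}$ and $\mathcal F_V:\mathrm{Ran}(PA^{\mathcal F}_V)\to\mathrm{Ran}(V)$; $\mathrm{Ex}(\mathcal F)=\mathrm{Dom}\setminus\mathrm{En}(\mathcal F)$; only recursive systems (acyclic parent graph), forming the finite set $\mathbb F_\sigma$. An assignment $s$ is compatible with $\mathcal F$ if $s(V)=\mathcal F_V(s(PA^{\mathcal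 F}_V))$ for $V\in\mathrm{En}(\mathcal F)$. A causal team $T=(T^-,\mathcal F)$ consists of $\mathcal F\in\mathbb F_\sigma$ and a set $T^-$ of assignments compatible with $\mathcal F$ (all teams with empty team component identified as $\emptyset$); causal subteams are $(S^-,\mathcal F)$ with $S^-\subseteq T^-$. For consistent $\mathbf X=\mathbf x$: $\mathcal F_{\mathbf X=\mathbf x}$ restricts $\mathcal F$ to $\mathrm{En}(\mathcal F)\setminus\mathbf X$, $s^{\mathcal F}_{\mathbf X=\mathbf x}$: $X_i\mapsto x_i$, $V\mapsto s(V)$ on $\mathrm{Ex}(\mathcal F)\setminus\mathbf X$, $V\mapsto\mathcal F_V(s^{\mathcal F}_{\mathbf X=\mathbf x}(PA^{\mathcal F}_V))$ on $\mathrm{En}(\mathcal F)\setminus\mathbf X$; $T_{\mathbf X=\mathbf x}=(\{s^{\mathcal F}_{\mathbf X=\mathbf x}:s\in T^-\},\mathcal F_{\mathbf X=\mathbf x})$. $\models^c$: $T\models X=x$ iff $s(X)=x$ for all $s\in T^-$; $T\models\neg\alpha$ iff $(\{s\},\mathcal F)\not\models\alpha$ for all $s\in T^-$; $\wedge$ classical; $T\models\varphi\vee\psi$ iff there are causal subteams $T_1,T_2$ with $T_1^-\cup T_2^-=T^-$, $T_1\models\varphi$, $T_2\models\psi$; $T\models\mathbf X=\mathbf x\;\Box\!\!\rightarrow\varphi$ iff $\mathbf X=\mathbf x$ inconsistent or $T_{\mathbf X=\mathbf x}\models\varphi$. $\mathrm{Cn}(\mathcal F)=\{V\in\mathrm{En}(\mathcal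 F):\mathcal F_V\text{ constant}\}$. With $\mathbf W_V$ listing $\mathrm{Dom}\setminus\{V\}$: $\Phi^{\mathcal F}:=\bigwedge_{V\in\mathrm{En}(\mathcal F)\setminus\mathrm{Cn}(\mathcal F)}\eta(V)\wedge\bigwedge_{V\notin\mathrm{En}(\mathcal F)\setminus\mathrm{Cn}(\mathcal F)}\xi(V)$, where $\eta(V)$ is the conjunction of all $(\mathbf W=\mathbf w\wedge PA^{\mathcal F}_V=\mathbf p)\;\Box\!\!\rightarrow V=\mathcal F_V(\mathbf p)$ ($\mathbf W$ listing $\mathrm{Dom}\setminus(PA^{\mathcal F}_V\cup\{V\})$, $\mathbf w\in\mathrm{Ran}(\mathbf W)$, $\mathbf p\in\mathrm{Ran}(PA^{\mathcal F}_V)$) and $\xi(V)$ is the conjunction of all $V=v\supset(\mathbf W_V=\mathbf w\;\Box\!\!\rightarrow V=v)$ ($v\in\mathrm{Ran}(V)$, $\mathbf w\in\mathrm{Ran}(\mathbf W_V)$). *)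

theory Defs
  imports "HOL-Library.FuncSet"
begin

text \<open>A signature is given by a set of variables D (Dom) and a range function R (Ran).
  Variables have type 'v, values type 'a. Assignments are elements of PiE D R.\<close>

definition signature :: "'v set \<Rightarrow> ('v \<Rightarrow> 'a set) \<Rightarrow> bool" where
  "signature D R \<longleftrightarrow> finite D \<and> D \<noteq> {} \<and> (\<forall>X\<in>D. finite (R X) \<and> R X \<noteq> {})"

text \<open>A system of functions: endogenous variables, parent sets, and for each
  endogenous V a function F_V from Ran(PA_V) (assignments on PA_V) to Ran(V).\<close>

record ('v, 'a) sysf =
  En :: "'v set"
  PA :: "'v \<Rightarrow> 'v set"
  Fn :: "'v \<Rightarrow> ('v \<Rightarrow> 'a) \<Rightarrow> 'a"

definition parent_graph :: "('v, 'a) sysf \<Rightarrow> ('v \<times> 'v) set" where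
  "parent_graph F = {(P, V). V \<in> En F \<and> P \<in> PA F V}"

text \<open>Recursive systems of functions over the signature; these form the set \<open>\<bbbF>_\<sigma>\<close>.\<close>

definition is_sysf :: "'v set \<Rightarrow> ('v \<Rightarrow> 'a set) \<Rightarrow> ('v, 'a) sysf \<Rightarrow> bool" where
  "is_sysf D R F \<longleftrightarrow>
     En F \<subseteq> D \<and>
     (\<forall>V\<in>En F. PA F V \<subseteq> D - {V} \<and> Fn F V \<in> PiE (PiE (PA F V) R) (\<lambda>_. R V)) \<and>
     (\<forall>V. V \<notin> En F \<longrightarrow> PA F V = {} \<and> Fn F V = undefined) \<and>
     acyclic (parent_graph F)"

definition sysfs :: "'v set \<Rightarrow> ('v \<Rightarrow> 'a set) \<Rightarrow> ('v, 'a) sysf set" where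
  "sysfs D R = {F. is_sysf D R F}"

definition compatible :: "'v set \<Rightarrow> ('v \<Rightarrow> 'a set) \<Rightarrow> ('v, 'a) sysf \<Rightarrow> ('v \<Rightarrow> 'a) \<Rightarrow> bool" where
  "compatible D R F s \<longleftrightarrow> s \<in> PiE D R \<and> (\<forall>V\<in>En F. s V = Fn F V (restrict s (PA F V)))"

definition causal_team :: "'v set \<Rightarrow> ('v \<Rightarrow> 'a set) \<Rightarrow> ('v \<Rightarrow> 'a) set \<Rightarrow> ('v, 'a) sysf \<Rightarrow> bool" where
  "causal_team D R T F \<longleftrightarrow> F \<in> sysfs D R \<and> (\<forall>s\<in>T. compatible D R F s)"

datatype ('v, 'a) form =
    Eq 'v 'a
  | Neg "('v, 'a) form"
  | Conj "('v, 'a) form" "('v, 'a) form"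
  | Disj "('v, 'a) form" "('v, 'a) form"
  | Cf "('v \<times> 'a) list" "('v, 'a) form"   (* X = x  \<box>\<rightarrow> alpha *)

definition Imp :: "('v, 'a) form \<Rightarrow> ('v, 'a) form \<Rightarrow> ('v, 'a) form" where
  "Imp a b = Disj (Neg a) b"

definition consistent :: "('v \<times> 'a) list \<Rightarrow> bool" where
  "consistent xs \<longleftrightarrow> (\<forall>(X, x)\<in>set xs. \<forall>(Y, y)\<in>set xs. X = Y \<longrightarrow> x = y)"

definition do_sys :: "('v, 'a) sysf \<Rightarrow> 'v set \<Rightarrow> ('v, 'a) sysf" where
  "do_sys F X = F\<lparr>En := En F - X,
                  PA := (\<lambda>V. if V \<in> X then {} else PA F V),
                  Fn := (\<lambda>V. if V \<in> X then undefined else Fn F V)\<rparr>"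

text \<open>Intervened assignment s^F_{X=x}: the (for recursive F unique) assignment on D that
  sets X_i to x_i, keeps exogenous non-intervened variables, and computes the remaining
  endogenous variables by their functions.\<close>

definition do_assign :: "'v set \<Rightarrow> ('v, 'a) sysf \<Rightarrow> ('v \<times> 'a) list \<Rightarrow> ('v \<Rightarrow> 'a) \<Rightarrow> ('v \<Rightarrow> 'a)" where
  "do_assign D F xs s = (THE t. t \<in> extensional D \<and>
      (\<forall>(X, x)\<in>set xs. t X = x) \<and>
      (\<forall>V\<in>D - En F - fst ` set xs. t V = s V) \<and>
      (\<forall>V\<in>En F - fst ` set xs. t V = Fn F V (restrict t (PA F V))))"

text \<open>Causal-team semantics: sat D F T phi means (T, F) \<Turnstile>^c phi.\<close>

fun sat :: "'v set \<Rightarrow> ('v, 'a) sysf \<Rightarrow> ('v \<Rightarrow> 'a) set \<Rightarrow> ('v, 'a) form \<Rightarrow> bool" where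
  "sat D F T (Eq X x) \<longleftrightarrow> (\<forall>s\<in>T. s X = x)"
| "sat D F T (Neg a) \<longleftrightarrow> (\<forall>s\<in>T. \<not> sat D F {s} a)"
| "sat D F T (Conj a b) \<longleftrightarrow> sat D F T a \<and> sat D F T b"
| "sat D F T (Disj a b) \<longleftrightarrow>
     (\<exists>T1 T2. T1 \<subseteq> T \<and> T2 \<subseteq> T \<and> T1 \<union> T2 = T \<and> sat D F T1 a \<and> sat D F T2 b)"
| "sat D F T (Cf xs a) \<longleftrightarrow>
     (\<not> consistent xs \<or> sat D (do_sys F (fst ` set xs)) (do_assign D F xs ` T) a)"

fun bigconj :: "('v, 'a) form list \<Rightarrow> ('v, 'a) form" where
  "bigconj [] = undefined"
| "bigconj [a] = a"
| "bigconj (a # as) = Conj a (bigconj as)"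

definition Conjs :: "('v, 'a) form set \<Rightarrow> ('v, 'a) form" where
  "Conjs A = bigconj (SOME xs. set xs = A \<and> distinct xs)"

definition ante :: "'v set \<Rightarrow> ('v \<Rightarrow> 'a) \<Rightarrow> ('v \<times> 'a) list" where
  "ante W u = map (\<lambda>X. (X, u X)) (SOME xs. set xs = W \<and> distinct xs)"

definition Cn :: "'v set \<Rightarrow> ('v \<Rightarrow> 'a set) \<Rightarrow> ('v, 'a) sysf \<Rightarrow> 'v set" where
  "Cn D R F = {V\<in>En F. \<forall>p\<in>PiE (PA F V) R. \<forall>q\<in>PiE (PA F V) R. Fn F V p = Fn F V q}"

text \<open>eta(V): all (W = w \<and> PA_V = p) \<box>\<rightarrow> V = F_V(p); the antecedent assigns all of D - {V},
  so it is given by an assignment u on D - {V}, with p = u restricted to PA_V.\<close>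

definition eta :: "'v set \<Rightarrow> ('v \<Rightarrow> 'a set) \<Rightarrow> ('v, 'a) sysf \<Rightarrow> 'v \<Rightarrow> ('v, 'a) form" where
  "eta D R F V = Conjs {Cf (ante (D - {V}) u) (Eq V (Fn F V (restrict u (PA F V)))) | u.
                          u \<in> PiE (D - {V}) R}"

definition xi :: "'v set \<Rightarrow> ('v \<Rightarrow> 'a set) \<Rightarrow> 'v \<Rightarrow> ('v, 'a) form" where
  "xi D R V = Conjs {Imp (Eq V v) (Cf (ante (D - {V}) w) (Eq V v)) | v w.
                       v \<in> R V \<and> w \<in> PiE (D - {V}) R}"

definition Phi :: "'v set \<Rightarrow> ('v \<Rightarrow> 'a set) \<Rightarrow> ('v, 'a) sysf \<Rightarrow> ('v, 'a) form" where
  "Phi D R F = Conjs ({eta D R F V | V. V \<in> En F - Cn D R F} \<union>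
                     {xi D R V | V. V \<in> D - (En F - Cn D R F)})"

end

theory Submission
  imports Defs
begin

lemma sat_bigconj:
  "xs \<noteq> [] \<Longrightarrow> (\<forall>a\<in>set xs. sat D F T a) \<Longrightarrow> sat D F T (bigconj xs)"
  by (induction xs rule: bigconj.induct) auto

lemma sat_Conjs:
  assumes "finite A" "A \<noteq> {}" "\<And>a. a \<in> A \<Longrightarrow> sat D F T a"
  shows "sat D F T (Conjs A)"
proof -
  let ?xs = "SOME xs. set xs = A \<and> distinct xs"
  have "set ?xs = A \<and> distinct ?xs"
    by (rule someI_ex) (use assms(1) finite_distinct_list in blast)
  then show ?thesis unfolding Conjs_def using assms by (intro sat_bigconj) auto
qed

lemma set_ante:
  assumes "finite W"
  shows "set (ante W u) = (\<lambda>X. (X, u X)) ` W"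
proof -
  let ?xs = "SOME xs. set xs = W \<and> distinct xs"
  have "set ?xs = W \<and> distinct ?xs"
    by (rule someI_ex) (use assms(1) finite_distinct_list in blast)
  then show ?thesis unfolding ante_def by simp
qed

lemma consistent_ante:
  assumes "finite W"
  shows "consistent (ante W u)"
  unfolding consistent_def set_ante[OF assms] by auto

lemma do_assign_full:
  assumes "is_sysf D R F" "V \<in> D" "finite D"
  shows "do_assign D F (ante (D-{V}) u) s V =
           (if V \<in> En F then Fn F V (restrict u (PA F V)) else s V)"
proof -
  have st: "set (ante (D-{V}) u) = (\<lambda>X. (X, u X)) ` (D-{V})"
    using set_ante assms(3) by blast
  have fs: "fst ` set (ante (D-{V}) u) = D - {V}" unfolding st by force
  have EnD: "En F \<subseteq> D" and PAV: "V \<in> En F \<Longrightarrow> PA F V \<subseteq> D - {V}"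
    using assms(1) unfolding is_sysf_def by auto
  define t0 where "t0 = (\<lambda>Y. if Y \<in> D - {V} then u Y else if Y = V then
      (if V \<in> En F then Fn F V (restrict u (PA F V)) else s V) else undefined)"
  let ?P = "\<lambda>t. t \<in> extensional D \<and>
      (\<forall>(X, x)\<in>set (ante (D-{V}) u). t X = x) \<and>
      (\<forall>V\<in>D - En F - fst ` set (ante (D-{V}) u). t V = s V) \<and>
      (\<forall>V\<in>En F - fst ` set (ante (D-{V}) u). t V = Fn F V (restrict t (PA F V)))"
  have r0: "V \<in> En F \<Longrightarrow> restrict t0 (PA F V) = restrict u (PA F V)"
    using PAV unfolding t0_def restrict_def by (intro ext) auto
  have e1: "t0 \<in> extensional D" using assms(2) by (auto simp: t0_def extensional_def)
  have e2: "\<forall>(X, x)\<in>set (ante (D-{V}) u). t0 X = x" unfolding st by (auto simp: t0_def)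
  have e3: "\<forall>W\<in>D - En F - fst ` set (ante (D-{V}) u). t0 W = s W"
    unfolding fs by (auto simp: t0_def)
  have e4: "\<forall>W\<in>En F - fst ` set (ante (D-{V}) u). t0 W = Fn F W (restrict t0 (PA F W))"
  proof
    fix W assume "W \<in> En F - fst ` set (ante (D-{V}) u)"
    then have "W = V" "V \<in> En F" using EnD unfolding fs by auto
    then show "t0 W = Fn F W (restrict t0 (PA F W))" using r0 by (simp add: t0_def)
  qed
  have Pt0: "?P t0" using e1 e2 e3 e4 by blast
  have uniq: "t = t0" if tP: "?P t" for t
  proof -
    have h1: "t \<in> extensional D" using tP[THEN conjunct1] .
    have h2': "\<forall>(X, x)\<in>set (ante (D-{V}) u). t X = x" using tP[THEN conjunct2, THEN conjunct1] .
    have h2: "\<forall>x\<in>D-{V}. t x = u x"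
    proof
      fix x assume "x \<in> D-{V}"
      then have "(x, u x) \<in> set (ante (D-{V}) u)" unfolding st by blast
      with h2' have "case (x, u x) of (X, y) \<Rightarrow> t X = y" by (rule bspec)
      then show "t x = u x" by simp
    qed
    have h3': "\<forall>W\<in>D - En F - fst ` set (ante (D-{V}) u). t W = s W" using tP[THEN conjunct2, THEN conjunct2, THEN conjunct1] .
    have h3: "V \<notin> En F \<Longrightarrow> t V = s V" using h3' assms(2) unfolding fs by blast
    have h4': "\<forall>W\<in>En F - fst ` set (ante (D-{V}) u). t W = Fn F W (restrict t (PA F W))"
      using tP[THEN conjunct2, THEN conjunct2, THEN conjunct2] .
    have h4: "V \<in> En F \<Longrightarrow> t V = Fn F V (restrict t (PA F V))" using h4' unfolding fs by blast
    have rt: "V \<in> En F \<Longrightarrow> restrict t (PA F V) = restrict u (PA F V)"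
      using h2 PAV unfolding restrict_def by (intro ext) auto
    show "t = t0"
    proof
      fix Y
      show "t Y = t0 Y"
      proof (cases "Y \<in> D")
        case False
        then show ?thesis using h1 assms(2) by (auto simp: t0_def extensional_def)
      next
        case True
        show ?thesis
        proof (cases "Y = V")
          case False
          then show ?thesis using h2 True unfolding t0_def by auto
        next
          case yV: True
          show ?thesis
          proof (cases "V \<in> En F")
            case True
            then show ?thesis using h4 yV rt unfolding t0_def by auto
          next
            case False
            then show ?thesis using h3 yV assms(2) unfolding t0_def by auto
          qed
        qed
      qed
    qed
  qed
  have "do_assign D F (ante (D-{V}) u) s = t0"
    unfolding do_assign_def
    apply (rule the_equality)
     apply (rule Pt0)
    apply (erule uniq)
    done
  then show ?thesis by (simp add: t0_def)
qed

theorem corollary3p6: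
  fixes D :: "'v set" and R :: "'v \<Rightarrow> 'a set"
  assumes "signature D R"
  shows "\<forall>T F. causal_team D R T F \<longrightarrow> (\<exists>G\<in>sysfs D R. sat D F T (Phi D R G))"
proof (intro allI impI)
  fix T F
  assume ct: "causal_team D R T F"
  have finD: "finite D" and neD: "D \<noteq> {}" and finR: "\<And>X. X \<in> D \<Longrightarrow> finite (R X)"
    and neR: "\<And>X. X \<in> D \<Longrightarrow> R X \<noteq> {}"
    using assms unfolding signature_def by auto
  have sf: "is_sysf D R F" and FG: "F \<in> sysfs D R" using ct unfolding causal_team_def sysfs_def by auto
  have comp: "\<And>s. s \<in> T \<Longrightarrow> compatible D R F s" using ct unfolding causal_team_def by auto
  have EnD: "En F \<subseteq> D" and PAV: "\<And>V. V \<in> En F \<Longrightarrow> PA F V \<subseteq> D - {V}"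
    using sf unfolding is_sysf_def by auto
  have finPi: "\<And>V. finite (PiE (D - {V}) R)"
    using finD finR by (intro finite_PiE) auto
  have nePi: "\<And>V. PiE (D - {V}) R \<noteq> {}"
    using neR by (simp add: PiE_eq_empty_iff)
  have eta_ok: "sat D F T (eta D R F V)" if V: "V \<in> En F" for V
    unfolding eta_def
  proof (rule sat_Conjs)
    show "finite {Cf (ante (D - {V}) u) (Eq V (Fn F V (restrict u (PA F V)))) | u. u \<in> PiE (D - {V}) R}"
      using finPi[of V] by (simp add: setcompr_eq_image)
    show "{Cf (ante (D - {V}) u) (Eq V (Fn F V (restrict u (PA F V)))) | u. u \<in> PiE (D - {V}) R} \<noteq> {}"
      using nePi[of V] by blast
    fix a assume "a \<in> {Cf (ante (D - {V}) u) (Eq V (Fn F V (restrict u (PA F V)))) | u. u \<in> PiE (D - {V}) R}"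
    then obtain u where a: "a = Cf (ante (D - {V}) u) (Eq V (Fn F V (restrict u (PA F V))))" by blast
    have VD: "V \<in> D" using V EnD by auto
    have fs: "fst ` set (ante (D-{V}) u) = D - {V}" using set_ante[OF finite_Diff[OF finD], of "{V}" u] by force
    show "sat D F T a"
      unfolding a using do_assign_full[OF sf VD finD, of u] V
      by (auto simp: consistent_ante finD)
  qed
  have xi_ok: "sat D F T (xi D R V)" if V: "V \<in> D" "V \<notin> En F - Cn D R F" for V
    unfolding xi_def
  proof (rule sat_Conjs)
    let ?A = "{Imp (Eq V v) (Cf (ante (D - {V}) w) (Eq V v)) | v w. v \<in> R V \<and> w \<in> PiE (D - {V}) R}"
    have "?A = (\<lambda>(v,w). Imp (Eq V v) (Cf (ante (D - {V}) w) (Eq V v))) ` (R V \<times> PiE (D - {V}) R)"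
      by auto
    then show "finite ?A" using finPi[of V] finR[OF V(1)] by simp
    show "?A \<noteq> {}" using nePi[of V] neR[OF V(1)] by blast
    fix a assume "a \<in> ?A"
    then obtain v w where a: "a = Imp (Eq V v) (Cf (ante (D - {V}) w) (Eq V v))"
      and w: "w \<in> PiE (D - {V}) R" by blast
    have key: "do_assign D F (ante (D-{V}) w) s V = v" if s: "s \<in> T" "s V = v" for s
    proof (cases "V \<in> En F")
      case False
      then show ?thesis using do_assign_full[OF sf V(1) finD, of w s] s by simp
    next
      case True
      then have cn: "V \<in> Cn D R F" using V by auto
      have sPi: "s \<in> PiE D R" and sc: "s V = Fn F V (restrict s (PA F V))"
        using comp[OF s(1)] True unfolding compatible_def by auto
      have p1: "restrict s (PA F V) \<in> PiE (PA F V) R"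
        using sPi PAV[OF True] by (auto simp: PiE_def Pi_def)
      have p2: "restrict w (PA F V) \<in> PiE (PA F V) R"
        using w PAV[OF True] by (auto simp: PiE_def Pi_def)
      have "Fn F V (restrict w (PA F V)) = Fn F V (restrict s (PA F V))"
        using cn p1 p2 unfolding Cn_def by blast
      then show ?thesis using do_assign_full[OF sf V(1) finD, of w s] True sc s by simp
    qed
    have n1: "sat D F {s\<in>T. s V \<noteq> v} (Neg (Eq V v))" by simp
    have n2: "sat D F {s\<in>T. s V = v} (Cf (ante (D - {V}) w) (Eq V v))" using key by auto
    show "sat D F T a"
      unfolding a Imp_def sat.simps(4)
      by (rule exI[of _ "{s\<in>T. s V \<noteq> v}"], rule exI[of _ "{s\<in>T. s V = v}"]) (use n1 n2 in auto)
  qed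
  show "\<exists>G\<in>sysfs D R. sat D F T (Phi D R G)"
  proof (rule bexI[OF _ FG])
    let ?B = "{eta D R F V | V. V \<in> En F - Cn D R F} \<union> {xi D R V | V. V \<in> D - (En F - Cn D R F)}"
    have "?B = eta D R F ` (En F - Cn D R F) \<union> xi D R ` (D - (En F - Cn D R F))" by auto
    then have "finite ?B" using finD EnD by (simp add: finite_subset)
    moreover have "?B \<noteq> {}" using neD by blast
    ultimately show "sat D F T (Phi D R F)"
      unfolding Phi_def using eta_ok xi_ok by (intro sat_Conjs) auto
  qed
qed

end
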